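(* Let $t\in[1,2]$, $\rho_1=\frac{\|p_{\le A}\|_r^{r/t}}{\sqrt n\,\|p_{\le I}\|_r^{r/4}}$ (set to $0$ if $A=-\infty$) and $\rho_2=\frac{\|p_{>I}\|_1^{\frac{2-t}{t}}}{n^{\frac{2t-2}{t}}}$. Then $$\rho_1+\rho_2+\frac1n\asymp_\eta\sqrt{\frac{\|p_{\le I}\|_r}{n}}+\rho_2+\frac1n.$$
   Context: $p\in[0,1]^N$ with $p_1\ge\dots\ge p_N$ and $\max_jp_j\le1/2$; $n\ge2$; $\eta\in(0,1)$. $\|x\|_s=(\sum_j|x_j|^s)^{1/s}$; $r=\frac{2t}{4-t}$, $b=\frac{4-2t}{4-t}$; $x_{\le u}=(x_1,\dots,x_u,0,\dots,0)$, $x_{>u}=(0,\dots,0,x_{u+1},\dots,x_N)$. $I=\min\{J\in\{0,\dots,N\}:\sum_{i>J}p_i^2\le c_I/n^2\}$; $A=\max\{a\in\{1,\dots,I\}:p_a^{b/2}\ge c_A/(\sqrt n(\sum_{i\le I}p_i^r)^{1/4})\}$ with $\max\emptyset=-\infty$ and $x_{\le-\infty}=0$; $c_I,c_A>0$ are small constants depending only on $\eta$. $\asymp_\eta$ means equality up to multiplicative constants depending only on $\eta$. *)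

theory Defs
  imports Complex_Main
begin

text \<open>Vectors x in R^N are represented as functions nat => real, indices 1..N.\<close>

definition lnorm :: "nat \<Rightarrow> real \<Rightarrow> (nat \<Rightarrow> real) \<Rightarrow> real" where
  "lnorm N s x = (\<Sum>j=1..N. \<bar>x j\<bar> powr s) powr (1 / s)"

definition trunc_le :: "nat \<Rightarrow> (nat \<Rightarrow> real) \<Rightarrow> nat \<Rightarrow> real" where
  "trunc_le u x = (\<lambda>j. if j \<le> u then x j else 0)"

definition trunc_gt :: "nat \<Rightarrow> (nat \<Rightarrow> real) \<Rightarrow> nat \<Rightarrow> real" where
  "trunc_gt u x = (\<lambda>j. if u < j then x j else 0)"

definition r_exp :: "real \<Rightarrow> real" where
  "r_exp t = 2 * t / (4 - t)"

definition b_exp :: "real \<Rightarrow> real" where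
  "b_exp t = (4 - 2 * t) / (4 - t)"

text \<open>Real power with the convention 0^0 = 1.\<close>
definition pw :: "real \<Rightarrow> real \<Rightarrow> real" where
  "pw x e = (if e = 0 then 1 else x powr e)"

definition Iidx :: "nat \<Rightarrow> nat \<Rightarrow> real \<Rightarrow> (nat \<Rightarrow> real) \<Rightarrow> nat" where
  "Iidx N n cI p = (LEAST J. J \<le> N \<and> (\<Sum>i\<in>{J<..N}. (p i)\<^sup>2) \<le> cI / (real n)\<^sup>2)"

text \<open>The set whose maximum is A (A = -infinity iff this set is empty).\<close>
definition Aset :: "nat \<Rightarrow> nat \<Rightarrow> real \<Rightarrow> real \<Rightarrow> real \<Rightarrow> (nat \<Rightarrow> real) \<Rightarrow> nat set" where
  "Aset N n cI cA t p =
     (let I = Iidx N n cI p; r = r_exp t; b = b_exp t in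
      {a \<in> {1..I}. p a powr (b / 2) \<ge>
         cA / (sqrt (real n) * (\<Sum>i=1..I. p i powr r) powr (1/4))})"

definition rho1 :: "nat \<Rightarrow> nat \<Rightarrow> real \<Rightarrow> real \<Rightarrow> real \<Rightarrow> (nat \<Rightarrow> real) \<Rightarrow> real" where
  "rho1 N n cI cA t p =
     (let I = Iidx N n cI p; r = r_exp t; As = Aset N n cI cA t p in
      if As = {} then 0
      else lnorm N r (trunc_le (Max As) p) powr (r / t)
           / (sqrt (real n) * lnorm N r (trunc_le I p) powr (r / 4)))"

definition rho2 :: "nat \<Rightarrow> nat \<Rightarrow> real \<Rightarrow> real \<Rightarrow> (nat \<Rightarrow> real) \<Rightarrow> real" where
  "rho2 N n cI t p =
     (let I = Iidx N n cI p in
      pw (lnorm N 1 (trunc_gt I p)) ((2 - t) / t) / real n powr ((2 * t - 2) / t))"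

end

theory Submission
  imports Defs
begin



lemma arith_a:
  fixes t b r lu lx ly lc lk :: real
  assumes t1: "1 \<le> t" and t2: "t \<le> 2" and hb: "(4-t)*b = 4-2*t" and hr: "(4-t)*r = 2*t"
    and ha: "lu \<ge> lk - lx"
    and h: "b/2*lu + lx/2 + r/4*ly < lc"
  shows "ly + lx \<le> 6*\<bar>lc\<bar> + 2*\<bar>lk\<bar>"
proof -
  have D: "4 - t > 0" using t2 by linarith
  have "4*(4-t)*(b/2*lu + lx/2 + r/4*ly) < 4*(4-t)*lc"
    using h D by simp
  also have "4*(4-t)*(b/2*lu + lx/2 + r/4*ly) = 2*((4-t)*b)*lu + 2*(4-t)*lx + ((4-t)*r)*ly"
    by (simp add: algebra_simps)
  finally have h2: "2*(4-2*t)*lu + 2*(4-t)*lx + 2*t*ly < 4*(4-t)*lc" using hb hr by simp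
  have h3: "(4-2*t)*lu \<ge> (4-2*t)*(lk - lx)" using ha t2 by (intro mult_left_mono) auto
  have h4: "(4-2*t)*(-lk) \<le> (4-2*t)*\<bar>lk\<bar>" using t2 by (intro mult_left_mono) auto
  have h5: "(4-t)*lc \<le> (4-t)*\<bar>lc\<bar>" using D by (intro mult_left_mono) auto
  have h6: "t*\<bar>lc\<bar> \<ge> \<bar>lc\<bar>" using t1 by (simp add: mult_le_cancel_right1)
  have h7: "t*\<bar>lk\<bar> \<ge> \<bar>lk\<bar>" using t1 by (simp add: mult_le_cancel_right1)
  have "t*(ly+lx) < t*(6*\<bar>lc\<bar> + 2*\<bar>lk\<bar>)"
    using h2 h3 h4 h5 h6 h7 by (simp add: algebra_simps)
  then show ?thesis using t1 by (simp add: mult_less_cancel_left_pos)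
qed

lemma arith_b:
  fixes t b r lu lx ly lc lk lL :: real
  assumes t1: "1 \<le> t" and t2: "t \<le> 2" and hb: "(4-t)*b = 4-2*t" and hr: "(4-t)*r = 2*t"
    and hbb: "lu + lL > lk - 2*lx"
    and h: "b/2*lu + lx/2 + r/4*ly < lc"
  shows "(ly - lx)/2 \<le> (3*\<bar>lc\<bar> + \<bar>lk\<bar>) + ((2-t)/t)*lL - ((2*t-2)/t)*lx"
proof -
  have D: "4 - t > 0" using t2 by linarith
  have "4*(4-t)*(b/2*lu + lx/2 + r/4*ly) < 4*(4-t)*lc"
    using h D by simp
  also have "4*(4-t)*(b/2*lu + lx/2 + r/4*ly) = 2*((4-t)*b)*lu + 2*(4-t)*lx + ((4-t)*r)*ly"
    by (simp add: algebra_simps)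
  finally have h2: "2*(4-2*t)*lu + 2*(4-t)*lx + 2*t*ly < 4*(4-t)*lc" using hb hr by simp
  have h3: "(4-2*t)*lu \<ge> (4-2*t)*(lk - 2*lx - lL)" using hbb t2 by (intro mult_left_mono) auto
  have h4: "(4-2*t)*(-lk) \<le> (4-2*t)*\<bar>lk\<bar>" using t2 by (intro mult_left_mono) auto
  have h5: "(4-t)*lc \<le> (4-t)*\<bar>lc\<bar>" using D by (intro mult_left_mono) auto
  have h6: "t*\<bar>lc\<bar> \<ge> \<bar>lc\<bar>" using t1 by (simp add: mult_le_cancel_right1)
  have h7: "t*\<bar>lk\<bar> \<ge> \<bar>lk\<bar>" using t1 by (simp add: mult_le_cancel_right1)
  have "t*((ly - lx)/2) \<le> t*((3*\<bar>lc\<bar> + \<bar>lk\<bar>) + ((2-t)/t)*lL - ((2*t-2)/t)*lx)"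
  proof -
    have "t*((3*\<bar>lc\<bar> + \<bar>lk\<bar>) + ((2-t)/t)*lL - ((2*t-2)/t)*lx)
        = t*(3*\<bar>lc\<bar> + \<bar>lk\<bar>) + (2-t)*lL - (2*t-2)*lx" using t1 by (simp add: field_simps)
    moreover have "t*((ly - lx)/2) \<le> t*(3*\<bar>lc\<bar> + \<bar>lk\<bar>) + (2-t)*lL - (2*t-2)*lx"
    proof -
      have g2: "8*lu + 8*lx + 2*(t*ly) + 4*(t*lc) < 2*(t*lx) + 16*lc + 4*(t*lu)" using h2 by (simp add: algebra_simps)
      have g3: "4*lk + 2*(t*lL) + 2*(t*lu) + 4*(t*lx) \<le> 4*lL + 4*lu + 2*(t*lk) + 8*lx" using h3 by (simp add: algebra_simps)
      have g4: "-4*lk + 2*(t*lk) \<le> 4*\<bar>lk\<bar> - 2*(t*\<bar>lk\<bar>)" using h4 by (simp add: algebra_simps)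
      have g5: "4*lc - t*lc \<le> 4*\<bar>lc\<bar> - t*\<bar>lc\<bar>" using h5 by (simp add: algebra_simps)
      have "t*((ly - lx)/2) = (t*ly)/2 - (t*lx)/2" by (simp add: field_simps)
      moreover have "t*(3*\<bar>lc\<bar> + \<bar>lk\<bar>) + (2-t)*lL - (2*t-2)*lx = 3*(t*\<bar>lc\<bar>) + t*\<bar>lk\<bar> + 2*lL - t*lL - 2*(t*lx) + 2*lx"
        by (simp add: algebra_simps)
      ultimately show ?thesis using g2 g3 g4 g5 h6 h7 by linarith
    qed
    ultimately show ?thesis by simp
  qed
  then show ?thesis using t1 by (simp add: mult_le_cancel_left_pos)
qed



lemma core:
  fixes cA cI x t u L Y :: real
  assumes cA: "cA > 0" and cI: "cI > 0" and x2: "x \<ge> 2" and t1: "1 \<le> t" and t2: "t \<le> 2"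
    and u0: "u \<ge> 0" and L0: "L \<ge> 0" and Y0: "Y > 0"
    and H1: "u powr (b_exp t / 2) < cA / (sqrt x * Y powr (r_exp t / 4))"
    and H2: "cI / x^2 < u^2 + u*L"
  shows "sqrt (Y/x) \<le> exp(3*\<bar>ln cA\<bar> + \<bar>ln (sqrt(cI/2))\<bar>) / x
            + exp(3*\<bar>ln cA\<bar> + \<bar>ln(cI/2)\<bar>) * (pw L ((2-t)/t) / x powr ((2*t-2)/t))"
  (is "_ \<le> ?Ka / x + ?Kb * ?rho")
proof -
  define b where "b = b_exp t"
  define r where "r = r_exp t"
  have D: "4 - t > 0" using t2 by linarith
  have hb: "(4-t)*b = 4-2*t" unfolding b_def b_exp_def using D by simp
  have hr: "(4-t)*r = 2*t" unfolding r_def r_exp_def using D by simp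
  have x0: "x > 0" using x2 by linarith
  have u: "u > 0"
  proof (rule ccontr)
    assume "\<not> u > 0" then have "u = 0" using u0 by simp
    then show False using H2 cI x0 by (simp add: divide_less_0_iff)
  qed
  have H1a: "u powr (b/2) * (sqrt x * Y powr (r/4)) < cA"
    using H1 x0 Y0 unfolding b_def r_def by (simp add: pos_less_divide_eq)
  have "ln (u powr (b/2) * (sqrt x * Y powr (r/4))) < ln cA"
    using H1a u x0 Y0 cA by (subst ln_less_cancel_iff) auto
  then have H1': "b/2*ln u + ln x/2 + r/4*ln Y < ln cA"
    using u x0 Y0 by (simp add: ln_mult ln_powr ln_sqrt)
  have Kb0: "?rho \<ge> 0" unfolding pw_def by auto
  show ?thesis
  proof (cases "u^2 \<ge> cI / (2*x^2)")
    case True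
    have "sqrt(cI/2)/x = sqrt(cI/(2*x^2))" using x0 by (simp add: real_sqrt_divide real_sqrt_mult)
    also have "\<dots> \<le> sqrt (u^2)" by (rule real_sqrt_le_mono[OF True])
    also have "\<dots> = u" using u0 by simp
    finally have "sqrt(cI/2)/x \<le> u" .
    then have "ln (sqrt(cI/2)/x) \<le> ln u" using cI x0 u by (subst ln_le_cancel_iff) auto
    then have la: "ln u \<ge> ln (sqrt(cI/2)) - ln x" using cI x0 by (simp add: ln_div)
    have f1: "ln Y + ln x \<le> 6*\<bar>ln cA\<bar> + 2*\<bar>ln (sqrt(cI/2))\<bar>"
      by (rule arith_a[OF t1 t2 hb hr la H1'])
    have f2: "ln (Y*x) = ln Y + ln x" using Y0 x0 by (simp add: ln_mult)
    have f3: "ln (?Ka^2) = 6*\<bar>ln cA\<bar> + 2*\<bar>ln (sqrt(cI/2))\<bar>"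
      by (simp add: ln_realpow)
    have "ln (Y*x) \<le> ln (?Ka^2)" unfolding f2 f3 by (rule f1)
    then have yx: "Y*x \<le> ?Ka^2" using Y0 x0 by (subst (asm) ln_le_cancel_iff) auto
    have "Y/x = (Y*x)/x^2" using x0 by (simp add: power2_eq_square)
    also have "\<dots> \<le> ?Ka^2/x^2" using yx x0 by (intro divide_right_mono) auto
    also have "\<dots> = (?Ka/x)^2" by (simp add: power_divide)
    finally have "Y/x \<le> (?Ka/x)^2" .
    then have "sqrt (Y/x) \<le> sqrt ((?Ka/x)^2)" by (rule real_sqrt_le_mono)
    also have "\<dots> = ?Ka/x" using x0 by simp
    finally have "sqrt (Y/x) \<le> ?Ka/x" .
    moreover have "?Kb * ?rho \<ge> 0" using Kb0 by (intro mult_nonneg_nonneg) auto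
    ultimately show ?thesis by linarith
  next
    case False
    have "cI/x^2 = 2*(cI/(2*x^2))" by simp
    then have uL: "u*L > cI/(2*x^2)" using H2 False by linarith
    have "cI/(2*x^2) > 0" using cI x0 by simp
    then have "u*L > 0" using uL by linarith
    then have uL0: "u*L > 0" .
    then have L: "L > 0" using u by (metis zero_less_mult_pos)
    have "ln (cI/(2*x^2)) < ln (u*L)" using uL cI x0 uL0 by (subst ln_less_cancel_iff) auto
    then have lb: "ln u + ln L > ln (cI/2) - 2*ln x" using cI x0 u L
      by (simp add: ln_mult ln_div ln_realpow)
    have main: "(ln Y - ln x)/2 \<le> (3*\<bar>ln cA\<bar> + \<bar>ln (cI/2)\<bar>) + ((2-t)/t)*ln L - ((2*t-2)/t)*ln x"
      by (rule arith_b[OF t1 t2 hb hr lb H1'])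
    have "sqrt (Y/x) = (Y/x) powr (1/2)" using Y0 x0 by (simp add: powr_half_sqrt)
    also have "\<dots> = exp ((ln Y - ln x)/2)"
      using Y0 x0 by (simp add: powr_def ln_div)
    also have "\<dots> \<le> exp ((3*\<bar>ln cA\<bar> + \<bar>ln (cI/2)\<bar>) + ((2-t)/t)*ln L - ((2*t-2)/t)*ln x)"
      using main by simp
    also have "\<dots> = ?Kb * ?rho"
      using L x0 by (simp add: pw_def powr_def exp_add exp_diff)
    finally have "sqrt (Y/x) \<le> ?Kb * ?rho" .
    moreover have "?Ka / x \<ge> 0" using x0 by simp
    ultimately show ?thesis by linarith
  qed
qed



lemma lnorm_trunc_le:
  assumes "k \<le> N" "\<forall>j\<in>{1..N}. 0 \<le> p j"
  shows "lnorm N r (trunc_le k p) = (\<Sum>i=1..k. p i powr r) powr (1/r)"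
proof -
  have "(\<Sum>j=1..N. \<bar>trunc_le k p j\<bar> powr r) = (\<Sum>j=1..N. if j \<le> k then p j powr r else 0)"
    using assms(2) by (intro sum.cong) (auto simp: trunc_le_def)
  also have "\<dots> = (\<Sum>j\<in>{j\<in>{1..N}. j \<le> k}. p j powr r)"
    by (rule sum.inter_filter[symmetric]) simp
  also have "{j\<in>{1..N}. j \<le> k} = {1..k}" using assms(1) by auto
  finally show ?thesis unfolding lnorm_def by simp
qed

lemma lnorm_trunc_gt:
  assumes "\<forall>j\<in>{1..N}. 0 \<le> p j"
  shows "lnorm N 1 (trunc_gt k p) = (\<Sum>i\<in>{k<..N}. p i)"
proof -
  have "(\<Sum>j=1..N. \<bar>trunc_gt k p j\<bar> powr 1) = (\<Sum>j=1..N. if k < j then p j else 0)"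
    using assms by (intro sum.cong) (auto simp: trunc_gt_def)
  also have "\<dots> = (\<Sum>j\<in>{j\<in>{1..N}. k < j}. p j)"
    by (rule sum.inter_filter[symmetric]) simp
  also have "{j\<in>{1..N}. k < j} = {k<..N}" by auto
  finally have "(\<Sum>j=1..N. \<bar>trunc_gt k p j\<bar> powr 1) = (\<Sum>i\<in>{k<..N}. p i)" .
  moreover have "(\<Sum>i\<in>{k<..N}. p i) \<ge> 0" using assms by (intro sum_nonneg) auto
  ultimately show ?thesis unfolding lnorm_def by simp
qed

lemma Iidx_le: "Iidx N n cI p \<le> N" if "cI > 0"
proof -
  have "N \<le> N \<and> (\<Sum>i\<in>{N<..N}. (p i)\<^sup>2) \<le> cI / (real n)\<^sup>2" using that by simp
  then show ?thesis unfolding Iidx_def by (rule Least_le)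
qed

lemma Iidx_prev:
  assumes "cI > 0" "Iidx N n cI p \<ge> 1"
  shows "(\<Sum>i\<in>{Iidx N n cI p - 1<..N}. (p i)\<^sup>2) > cI / (real n)\<^sup>2"
proof -
  have lt: "Iidx N n cI p - 1 < Iidx N n cI p" using assms(2) by simp
  have le: "Iidx N n cI p - 1 \<le> N" using Iidx_le[OF assms(1), of N n p] by simp
  from not_less_Least[OF lt[unfolded Iidx_def]] le show ?thesis
    unfolding Iidx_def by auto
qed

lemma powr_ratio:
  fixes Y x t :: real
  assumes "Y > 0" "x > 0" "1 \<le> t" "t \<le> 2"
  shows "Y powr (r_exp t / t) / (sqrt x * Y powr (r_exp t / 4)) = sqrt (Y/x)"
proof -
  have D: "4 - t > 0" using assms by linarith
  have e: "r_exp t / t = 1/2 + r_exp t / 4"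
    unfolding r_exp_def using D assms(3) by (simp add: field_simps)
  have "Y powr (r_exp t / t) = sqrt Y * Y powr (r_exp t / 4)"
    unfolding e powr_add using assms(1) by (simp add: powr_half_sqrt)
  then show ?thesis using assms by (simp add: real_sqrt_divide)
qed


lemma main_bounds:
  fixes cIe cAe t :: real and N n :: nat and p :: "nat \<Rightarrow> real"
  assumes cI: "cIe > 0" and cA: "cAe > 0"
    and hp: "\<forall>j\<in>{1..N}. 0 \<le> p j \<and> p j \<le> 1/2"
    and mono: "\<forall>i j. 1 \<le> i \<longrightarrow> i \<le> j \<longrightarrow> j \<le> N \<longrightarrow> p j \<le> p i"
    and n2: "2 \<le> n" and t1: "1 \<le> t" and t2: "t \<le> 2"
  shows "rho1 N n cIe cAe t p \<ge> 0 \<and> rho2 N n cIe t p \<ge> 0 \<and>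
         rho1 N n cIe cAe t p \<le> sqrt (lnorm N (r_exp t) (trunc_le (Iidx N n cIe p) p) / real n) \<and>
         sqrt (lnorm N (r_exp t) (trunc_le (Iidx N n cIe p) p) / real n)
           \<le> rho1 N n cIe cAe t p
             + exp(3*\<bar>ln cAe\<bar> + \<bar>ln (sqrt(cIe/2))\<bar>) / real n
             + exp(3*\<bar>ln cAe\<bar> + \<bar>ln(cIe/2)\<bar>) * rho2 N n cIe t p"
proof -
  define I where "I = Iidx N n cIe p"
  define r where "r = r_exp t"
  define x where "x = real n"
  define As where "As = Aset N n cIe cAe t p"
  define S where "S = (\<Sum>i=1..I. p i powr r)"
  define Y where "Y = lnorm N r (trunc_le I p)"
  define L where "L = (\<Sum>i\<in>{I<..N}. p i)"
  have x0: "x > 0" and x2: "x \<ge> 2" using n2 unfolding x_def by auto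
  have IN: "I \<le> N" unfolding I_def by (rule Iidx_le[OF cI])
  have p0: "\<forall>j\<in>{1..N}. 0 \<le> p j" using hp by auto
  have r0: "r > 0" unfolding r_def r_exp_def using t1 t2 by simp
  have S0: "S \<ge> 0" unfolding S_def by (intro sum_nonneg) auto
  have YS: "Y = S powr (1/r)" unfolding Y_def S_def using lnorm_trunc_le[OF IN p0] by simp
  have Y0: "Y \<ge> 0" unfolding YS by simp
  have L2: "lnorm N 1 (trunc_gt I p) = L" unfolding L_def by (rule lnorm_trunc_gt[OF p0])
  have rho2eq: "rho2 N n cIe t p = pw L ((2-t)/t) / x powr ((2*t-2)/t)"
    unfolding rho2_def Let_def I_def[symmetric] L2 x_def by simp
  have R2: "rho2 N n cIe t p \<ge> 0" unfolding rho2eq pw_def by auto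
  have As_sub: "As \<subseteq> {1..I}" unfolding As_def Aset_def Let_def I_def by auto
  have finAs: "finite As" using As_sub finite_subset by blast
  have rho1eq: "rho1 N n cIe cAe t p = (if As = {} then 0 else
       lnorm N r (trunc_le (Max As) p) powr (r / t) / (sqrt x * Y powr (r / 4)))"
    unfolding rho1_def Let_def I_def[symmetric] As_def[symmetric] r_def[symmetric] Y_def x_def by simp
  have R1: "rho1 N n cIe cAe t p \<ge> 0" unfolding rho1eq using x0 by auto
  have up: "rho1 N n cIe cAe t p \<le> sqrt (Y/x)"
  proof (cases "As = {}")
    case True then show ?thesis unfolding rho1eq using Y0 x0 by simp
  next
    case False
    define A where "A = Max As"
    have AI: "A \<le> I" unfolding A_def using As_sub finAs False
      by (meson Max_in atLeastAtMost_iff subsetD)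
    have AN: "A \<le> N" using AI IN by simp
    have Q: "lnorm N r (trunc_le A p) = (\<Sum>i=1..A. p i powr r) powr (1/r)"
      by (rule lnorm_trunc_le[OF AN p0])
    have "(\<Sum>i=1..A. p i powr r) \<le> S" unfolding S_def using AI
      by (intro sum_mono2) auto
    then have "lnorm N r (trunc_le A p) \<le> Y" unfolding Q YS using r0
      by (intro powr_mono2) (auto intro: sum_nonneg)
    then have num: "lnorm N r (trunc_le A p) powr (r/t) \<le> Y powr (r/t)"
      using r0 t1 by (intro powr_mono2) (auto simp: lnorm_def)
    show ?thesis
    proof (cases "Y = 0")
      case True
      then have "lnorm N r (trunc_le A p) powr (r/t) = 0" using num
        by (metis powr_nonneg_iff order_antisym_conv powr_ge_zero)
      then show ?thesis unfolding rho1eq using False A_def Y0 x0 by simp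
    next
      case Yp: False
      then have Yp: "Y > 0" using Y0 by simp
      have "rho1 N n cIe cAe t p \<le> Y powr (r / t) / (sqrt x * Y powr (r / 4))"
        unfolding rho1eq using False A_def num x0 Yp
        by (auto intro!: divide_right_mono)
      also have "\<dots> = sqrt (Y/x)" unfolding r_def by (rule powr_ratio[OF Yp x0 t1 t2])
      finally show ?thesis .
    qed
  qed
  have low: "sqrt (Y/x) \<le> rho1 N n cIe cAe t p
             + exp(3*\<bar>ln cAe\<bar> + \<bar>ln (sqrt(cIe/2))\<bar>) / x
             + exp(3*\<bar>ln cAe\<bar> + \<bar>ln(cIe/2)\<bar>) * rho2 N n cIe t p"
  proof (cases "I \<in> As")
    case True
    have AsI: "Max As = I" using True As_sub finAs by (intro Max_eqI) auto
    have nE: "As \<noteq> {}" using True by auto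
    have r1: "rho1 N n cIe cAe t p = Y powr (r / t) / (sqrt x * Y powr (r / 4))"
      unfolding rho1eq using nE AsI Y_def by simp
    have Kb2: "exp(3*\<bar>ln cAe\<bar> + \<bar>ln(cIe/2)\<bar>) * rho2 N n cIe t p \<ge> 0"
      using R2 by simp
    have Ka2: "exp(3*\<bar>ln cAe\<bar> + \<bar>ln (sqrt(cIe/2))\<bar>) / x \<ge> 0" using x0 by simp
    show ?thesis
    proof (cases "Y = 0")
      case True then show ?thesis using R1 Kb2 Ka2 by simp
    next
      case False
      then have Yp: "Y > 0" using Y0 by simp
      have "rho1 N n cIe cAe t p = sqrt (Y/x)" unfolding r1 r_def by (rule powr_ratio[OF Yp x0 t1 t2])
      then show ?thesis using Kb2 Ka2 by linarith
    qed
  next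
    case notin: False
    show ?thesis
    proof (cases "Y = 0")
      case True then show ?thesis using R1 R2 x0 by simp
    next
      case False
      then have Yp: "Y > 0" using Y0 by simp
      have Sp: "S > 0" using Yp S0 unfolding YS by (cases "S = 0") auto
      have I1: "I \<ge> 1"
      proof (rule ccontr)
        assume "\<not> I \<ge> 1" then have "I = 0" by simp
        then have "S = 0" unfolding S_def by simp
        then show False using Sp by simp
      qed
      have S4: "S powr (1/4) = Y powr (r/4)" unfolding YS powr_powr using r0 by simp
      have "I \<in> {1..I}" using I1 by simp
      then have "\<not> (p I powr (b_exp t / 2) \<ge> cAe / (sqrt x * S powr (1/4)))"
        using notin unfolding As_def Aset_def Let_def I_def[symmetric] r_def[symmetric] S_def[symmetric] x_def
        by auto
      then have H1: "p I powr (b_exp t / 2) < cAe / (sqrt x * Y powr (r_exp t / 4))"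
        unfolding S4 r_def by simp
      have pI: "0 \<le> p I" using p0 I1 IN by auto
      have L0: "L \<ge> 0" unfolding L_def using p0 by (intro sum_nonneg) auto
      have "cIe / x^2 < (\<Sum>i\<in>{I - 1<..N}. (p i)\<^sup>2)"
        using Iidx_prev[OF cI, of N n p] I1 unfolding I_def x_def by simp
      also have "{I - 1<..N} = insert I {I<..N}" using I1 IN by auto
      also have "(\<Sum>i\<in>insert I {I<..N}. (p i)\<^sup>2) = (p I)^2 + (\<Sum>i\<in>{I<..N}. (p i)\<^sup>2)"
        by simp
      also have "(\<Sum>i\<in>{I<..N}. (p i)\<^sup>2) \<le> (\<Sum>i\<in>{I<..N}. p I * p i)"
      proof (rule sum_mono)
        fix i assume i: "i \<in> {I<..N}"
        then have "0 \<le> p i" "p i \<le> p I" using p0 mono I1 by auto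
        then show "(p i)\<^sup>2 \<le> p I * p i" by (simp add: power2_eq_square mult_right_mono)
      qed
      also have "(\<Sum>i\<in>{I<..N}. p I * p i) = p I * L" unfolding L_def by (simp add: sum_distrib_left)
      finally have H2: "cIe / x^2 < (p I)^2 + p I * L" by simp
      have "sqrt (Y/x) \<le> exp(3*\<bar>ln cAe\<bar> + \<bar>ln (sqrt(cIe/2))\<bar>) / x
            + exp(3*\<bar>ln cAe\<bar> + \<bar>ln(cIe/2)\<bar>) * (pw L ((2-t)/t) / x powr ((2*t-2)/t))"
        by (rule core[OF cA cI x2 t1 t2 pI L0 Yp H1 H2])
      then show ?thesis using R1 unfolding rho2eq by linarith
    qed
  qed
  show ?thesis using R1 R2 up low unfolding Y_def I_def r_def x_def by simp
qed


lemma fin_arith: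
  fixes R1 R2 z s Ka Kb :: real
  assumes "R1 \<ge> 0" "R2 \<ge> 0" "z > 0" "R1 \<le> s" "s \<le> R1 + Ka*z + Kb*R2" "Ka > 0" "Kb > 0"
  shows "R1 + R2 + z \<le> (2+Ka+Kb)*(s+R2+z) \<and> s + R2 + z \<le> (2+Ka+Kb)*(R1+R2+z)"
proof -
  have s0: "s \<ge> 0" using assms by linarith
  have "R1 + R2 + z \<le> 1*(s+R2+z)" using assms by simp
  also have "1*(s+R2+z) \<le> (2+Ka+Kb)*(s+R2+z)" using assms s0 by (intro mult_right_mono) auto
  finally have c1: "R1 + R2 + z \<le> (2+Ka+Kb)*(s+R2+z)" .
  have d: "(2+Ka+Kb)*(R1+R2+z) = (2+Ka+Kb)*R1 + (2+Ka+Kb)*R2 + (2+Ka+Kb)*z" by (simp add: distrib_left)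
  have d1: "(2+Ka+Kb)*R1 \<ge> 1*R1" using assms by (intro mult_right_mono) auto
  have d2: "(2+Ka+Kb)*R2 \<ge> (1+Kb)*R2" using assms by (intro mult_right_mono) auto
  have d3: "(2+Ka+Kb)*z \<ge> (1+Ka)*z" using assms by (intro mult_right_mono) auto
  have d4: "(1+Kb)*R2 = R2 + Kb*R2" "(1+Ka)*z = z + Ka*z" by (simp_all add: distrib_right)
  have c2: "s + R2 + z \<le> (2+Ka+Kb)*(R1+R2+z)" unfolding d using d1 d2 d3 d4 assms by linarith
  show ?thesis using c1 c2 by blast
qed

theorem lemmaA7:
  fixes cI cA :: "real \<Rightarrow> real"
  assumes "\<forall>\<eta>::real. 0 < \<eta> \<and> \<eta> < 1 \<longrightarrow> cI \<eta> > 0 \<and> cA \<eta> > 0"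
  shows "\<forall>\<eta>::real. 0 < \<eta> \<and> \<eta> < 1 \<longrightarrow>
    (\<exists>C>0. \<forall>(N::nat) (p::nat \<Rightarrow> real) (n::nat) (t::real).
       (\<forall>j\<in>{1..N}. 0 \<le> p j \<and> p j \<le> 1/2) \<and>
       (\<forall>i j. 1 \<le> i \<longrightarrow> i \<le> j \<longrightarrow> j \<le> N \<longrightarrow> p j \<le> p i) \<and>
       2 \<le> n \<and> 1 \<le> t \<and> t \<le> 2 \<longrightarrow>
       (let L = rho1 N n (cI \<eta>) (cA \<eta>) t p + rho2 N n (cI \<eta>) t p + 1 / real n;
            R = sqrt (lnorm N (r_exp t) (trunc_le (Iidx N n (cI \<eta>) p) p) / real n)
                + rho2 N n (cI \<eta>) t p + 1 / real n
        in L \<le> C * R \<and> R \<le> C * L))"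
proof (intro allI impI)
  fix \<eta> :: real assume h: "0 < \<eta> \<and> \<eta> < 1"
  have cI: "cI \<eta> > 0" and cA: "cA \<eta> > 0" using assms h by auto
  define Ka where "Ka = exp(3*\<bar>ln (cA \<eta>)\<bar> + \<bar>ln (sqrt(cI \<eta>/2))\<bar>)"
  define Kb where "Kb = exp(3*\<bar>ln (cA \<eta>)\<bar> + \<bar>ln(cI \<eta>/2)\<bar>)"
  have Ka0: "Ka > 0" and Kb0: "Kb > 0" unfolding Ka_def Kb_def by auto
  show "\<exists>C>0. \<forall>(N::nat) (p::nat \<Rightarrow> real) (n::nat) (t::real).
       (\<forall>j\<in>{1..N}. 0 \<le> p j \<and> p j \<le> 1/2) \<and>
       (\<forall>i j. 1 \<le> i \<longrightarrow> i \<le> j \<longrightarrow> j \<le> N \<longrightarrow> p j \<le> p i) \<and>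
       2 \<le> n \<and> 1 \<le> t \<and> t \<le> 2 \<longrightarrow>
       (let L = rho1 N n (cI \<eta>) (cA \<eta>) t p + rho2 N n (cI \<eta>) t p + 1 / real n;
            R = sqrt (lnorm N (r_exp t) (trunc_le (Iidx N n (cI \<eta>) p) p) / real n)
                + rho2 N n (cI \<eta>) t p + 1 / real n
        in L \<le> C * R \<and> R \<le> C * L)"
  proof (intro exI[of _ "2 + Ka + Kb"] conjI allI impI)
    show "2 + Ka + Kb > 0" using Ka0 Kb0 by simp
    fix N :: nat and p :: "nat \<Rightarrow> real" and n :: nat and t :: real
    assume H: "(\<forall>j\<in>{1..N}. 0 \<le> p j \<and> p j \<le> 1/2) \<and>
       (\<forall>i j. 1 \<le> i \<longrightarrow> i \<le> j \<longrightarrow> j \<le> N \<longrightarrow> p j \<le> p i) \<and>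
       2 \<le> n \<and> 1 \<le> t \<and> t \<le> 2"
    then have hp: "\<forall>j\<in>{1..N}. 0 \<le> p j \<and> p j \<le> 1/2"
      and mono: "\<forall>i j. 1 \<le> i \<longrightarrow> i \<le> j \<longrightarrow> j \<le> N \<longrightarrow> p j \<le> p i"
      and n2: "2 \<le> n" and t1: "1 \<le> t" and t2: "t \<le> 2" by auto
    note mb = main_bounds[OF cI cA hp mono n2 t1 t2]
    have z: "1 / real n > 0" using n2 by simp
    have eqa: "Ka / real n = Ka * (1 / real n)" by simp
    show "let L = rho1 N n (cI \<eta>) (cA \<eta>) t p + rho2 N n (cI \<eta>) t p + 1 / real n;
            R = sqrt (lnorm N (r_exp t) (trunc_le (Iidx N n (cI \<eta>) p) p) / real n)
                + rho2 N n (cI \<eta>) t p + 1 / real n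
        in L \<le> (2 + Ka + Kb) * R \<and> R \<le> (2 + Ka + Kb) * L"
      unfolding Let_def
      using fin_arith[OF _ _ z _ _ Ka0 Kb0] mb unfolding Ka_def[symmetric] Kb_def[symmetric] eqa
      by blast
  qed
qed

end
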